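(* Let $q\in\mathbb{C}[x_0,\dots,x_3]_2$ be a quadratic form of rank four. There are no nonsingular (i.e. reduced, consisting of ten distinct points) subschemes of $\mathbb{P}^3$ of length ten apolar to $q^2$.
   Context: $T=\mathbb{C}[y_0,\dots,y_3]$ acts on $S=\mathbb{C}[x_0,\dots,x_3]$ by differentiation; $\mathbb{P}^3=\mathbb{P}(S_1)$ has coordinate ring $T$, and a subscheme $\Gamma$ is apolar to $f$ if every element of its ideal $I_\Gamma\subset T$ annihilates $f$. *)

theory Defs
  imports "HOL-Analysis.Analysis"
begin

text \<open>Polynomials in four variables over the complex numbers, represented by
their coefficient functions on exponent vectors (monomials) indexed by the
type 4 (variables 0..3). The same representation serves for
S = C[x_0..x_3] and for T = C[y_0..y_3].\<close>

type_synonym mon = "4 \<Rightarrow> nat"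
type_synonym poly4 = "mon \<Rightarrow> complex"

definition is_poly :: "poly4 \<Rightarrow> bool" where
  "is_poly p \<longleftrightarrow> finite {a. p a \<noteq> 0}"

definition mdeg :: "mon \<Rightarrow> nat" where
  "mdeg a = (\<Sum>i\<in>UNIV. a i)"

definition homog :: "nat \<Rightarrow> poly4 \<Rightarrow> bool" where
  "homog d p \<longleftrightarrow> (\<forall>a. p a \<noteq> 0 \<longrightarrow> mdeg a = d)"

definition hcomp :: "nat \<Rightarrow> poly4 \<Rightarrow> poly4" where
  "hcomp d p = (\<lambda>a. if mdeg a = d then p a else 0)"

definition peval :: "poly4 \<Rightarrow> complex^4 \<Rightarrow> complex" where
  "peval p v = (\<Sum>a\<in>{a. p a \<noteq> 0}. p a * (\<Prod>i\<in>UNIV. (v $ i) ^ (a i)))"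

definition pmult :: "poly4 \<Rightarrow> poly4 \<Rightarrow> poly4" where
  "pmult p r = (\<lambda>c. \<Sum>(a,b)\<in>{(a,b). p a \<noteq> 0 \<and> r b \<noteq> 0 \<and> (\<lambda>i. a i + b i) = c}. p a * r b)"

text \<open>Apolarity action of T on S by differentiation:
  y^a acting on x^(a+c) gives (prod_i (a_i+c_i)!/c_i!) x^c.\<close>
definition papply :: "poly4 \<Rightarrow> poly4 \<Rightarrow> poly4" where
  "papply g f = (\<lambda>c. \<Sum>a\<in>{a. g a \<noteq> 0}.
      g a * f (\<lambda>i. a i + c i) *
      (\<Prod>i\<in>UNIV. of_nat (fact (a i + c i)) / of_nat (fact (c i))))"

text \<open>Symmetric matrix of a quadratic form: q(x) = x^T M x.\<close>
definition qmat :: "poly4 \<Rightarrow> complex^4^4" where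
  "qmat q = (\<chi> i j. q (\<lambda>k. (if k = i then 1 else 0) + (if k = j then 1 else 0))
                       / (if i = j then 1 else 2))"

text \<open>A finite set of points of P^3 given by nonzero representatives in C^4,
pairwise non-proportional (so distinct points). Its (saturated, homogeneous)
ideal I_Gamma in T consists of the polynomials all of whose homogeneous
components vanish at every point.\<close>
definition proj_points :: "(complex^4) set \<Rightarrow> bool" where
  "proj_points G \<longleftrightarrow> (\<forall>v\<in>G. v \<noteq> 0) \<and>
     (\<forall>u\<in>G. \<forall>v\<in>G. u \<noteq> v \<longrightarrow> \<not> (\<exists>c. v = c *s u))"

definition ideal_of_points :: "(complex^4) set \<Rightarrow> poly4 set" where
  "ideal_of_points G = {g. is_poly g \<and> (\<forall>d. \<forall>v\<in>G. peval (hcomp d g) v = 0)}"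

definition apolar :: "(complex^4) set \<Rightarrow> poly4 \<Rightarrow> bool" where
  "apolar G f \<longleftrightarrow> (\<forall>g\<in>ideal_of_points G. papply g f = (\<lambda>_. 0))"

end

theory Submission
  imports Defs
begin

definition madd :: "mon \<Rightarrow> mon \<Rightarrow> mon" where "madd a b = (\<lambda>i. a i + b i)"
definition msub :: "mon \<Rightarrow> mon \<Rightarrow> mon" where "msub a b = (\<lambda>i. a i - b i)"
definition ev :: "4 \<Rightarrow> mon" where "ev s = (\<lambda>k. if k = s then 1 else 0)"
definition facm :: "mon \<Rightarrow> complex" where "facm a = (\<Prod>i\<in>UNIV. of_nat (fact (a i)))"
definition below :: "mon \<Rightarrow> mon set" where "below c = {a. \<forall>i. a i \<le> c i}"
definition Dp :: "4 \<Rightarrow> poly4 \<Rightarrow> poly4" where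
  "Dp s f = (\<lambda>c. f (madd c (ev s)) * of_nat (c s + 1))"
definition zm :: mon where "zm = (\<lambda>_. 0)"

lemma finite_below: "finite (below c)"
proof -
  have "below c = PiE UNIV (\<lambda>i. {..c i})"
    by (auto simp: below_def PiE_UNIV_domain)
  then show ?thesis by (simp add: finite_PiE)
qed

lemma pmult_alt: "pmult f g c = (\<Sum>a\<in>below c. f a * g (msub c a))"
proof -
  let ?P = "{(a,b). f a \<noteq> 0 \<and> g b \<noteq> 0 \<and> (\<lambda>i. a i + b i) = c}"
  let ?h = "\<lambda>a. (a, msub c a)"
  have sub: "?P \<subseteq> ?h ` below c"
  proof
    fix x assume "x \<in> ?P"
    then obtain a b where x: "x = (a,b)" and ab: "(\<lambda>i. a i + b i) = c" by auto
    have "a \<in> below c" using ab by (auto simp: below_def)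
    moreover have "b = msub c a" using ab by (auto simp: msub_def)
    ultimately show "x \<in> ?h ` below c" using x by auto
  qed
  have "pmult f g c = (\<Sum>(a,b)\<in>?P. f a * g b)" by (simp add: pmult_def)
  also have "\<dots> = (\<Sum>(a,b)\<in>?h ` below c. f a * g b)"
  proof (rule sum.mono_neutral_left)
    show "finite (?h ` below c)" using finite_below by simp
    show "?P \<subseteq> ?h ` below c" by (rule sub)
    show "\<forall>i\<in>?h ` below c - ?P. (case i of (a, b) \<Rightarrow> f a * g b) = 0"
    proof
      fix x assume x: "x \<in> ?h ` below c - ?P"
      then obtain a where a: "a \<in> below c" "x = (a, msub c a)" by auto
      have "(\<lambda>i. a i + msub c a i) = c" using a(1) by (auto simp: below_def msub_def)
      then show "(case x of (a, b) \<Rightarrow> f a * g b) = 0" using x a by auto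
    qed
  qed
  also have "\<dots> = (\<Sum>a\<in>below c. f a * g (msub c a))"
    by (subst sum.reindex) (auto simp: inj_on_def)
  finally show ?thesis .
qed

lemma below_zm: "below zm = {zm}"
  by (auto simp: below_def zm_def)

lemma pmult_zm: "pmult f g zm = f zm * g zm"
proof -
  have "msub zm zm = zm" by (simp add: msub_def zm_def)
  then show ?thesis by (simp add: pmult_alt below_zm)
qed

lemma Dp_add: "Dp s (\<lambda>c. A c + B c) = (\<lambda>c. Dp s A c + Dp s B c)"
  by (simp add: Dp_def fun_eq_iff algebra_simps)

lemma Dp_leibniz: "Dp s (pmult f g) = (\<lambda>c. pmult (Dp s f) g c + pmult f (Dp s g) c)"
proof
  fix c
  let ?c' = "madd c (ev s)"
  have split: "of_nat (a s) + of_nat (c s + 1 - a s) = (of_nat (c s + 1) :: complex)" if "a \<in> below ?c'" for a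
  proof -
    have "a s \<le> c s + 1" using that by (auto simp: below_def madd_def ev_def dest: spec[of _ s])
    then have e: "a s + (c s + 1 - a s) = c s + 1" by simp
    show ?thesis by (simp only: of_nat_add[symmetric] e)
  qed
  have "Dp s (pmult f g) c = (\<Sum>a\<in>below ?c'. f a * g (msub ?c' a) * of_nat (c s + 1))"
    by (simp add: Dp_def pmult_alt sum_distrib_right)
  also have "\<dots> = (\<Sum>a\<in>below ?c'. f a * g (msub ?c' a) * of_nat (a s))
       + (\<Sum>a\<in>below ?c'. f a * g (msub ?c' a) * of_nat (c s + 1 - a s))"
    unfolding sum.distrib[symmetric]
  proof (rule sum.cong[OF refl])
    fix a assume "a \<in> below ?c'"
    show "f a * g (msub ?c' a) * of_nat (c s + 1) = f a * g (msub ?c' a) * of_nat (a s) + f a * g (msub ?c' a) * of_nat (c s + 1 - a s)"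
      by (simp only: distrib_left[symmetric] split[OF \<open>a \<in> below ?c'\<close>])
  qed
  also have "(\<Sum>a\<in>below ?c'. f a * g (msub ?c' a) * of_nat (a s)) = pmult (Dp s f) g c"
  proof -
    have "(\<Sum>a\<in>below ?c'. f a * g (msub ?c' a) * of_nat (a s))
        = (\<Sum>a\<in>(\<lambda>b. madd b (ev s)) ` below c. f a * g (msub ?c' a) * of_nat (a s))"
    proof (rule sum.mono_neutral_right)
      show "finite (below ?c')" by (rule finite_below)
      show "(\<lambda>b. madd b (ev s)) ` below c \<subseteq> below ?c'"
        by (auto simp: below_def madd_def ev_def)
      show "\<forall>a\<in>below ?c' - (\<lambda>b. madd b (ev s)) ` below c. f a * g (msub ?c' a) * of_nat (a s) = 0"
      proof
        fix a assume a: "a \<in> below ?c' - (\<lambda>b. madd b (ev s)) ` below c"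
        show "f a * g (msub ?c' a) * of_nat (a s) = 0"
        proof (cases "a s = 0")
          case False
          have H: "\<forall>i. a i \<le> c i + (if i = s then 1 else 0)" using a by (simp add: below_def madd_def ev_def)
          have "msub a (ev s) \<in> below c" unfolding below_def msub_def ev_def mem_Collect_eq
          proof (intro allI)
            fix i show "a i - (if i = s then 1 else 0) \<le> c i" using H[rule_format, of i] by (cases "i = s") auto
          qed
          moreover have "a = madd (msub a (ev s)) (ev s)" using False by (auto simp: fun_eq_iff madd_def msub_def ev_def)
          ultimately show ?thesis using a by blast
        qed simp
      qed
    qed
    also have "\<dots> = (\<Sum>b\<in>below c. f (madd b (ev s)) * g (msub ?c' (madd b (ev s))) * of_nat (madd b (ev s) s))"
      by (subst sum.reindex) (auto simp: inj_on_def madd_def fun_eq_iff)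
    also have "\<dots> = (\<Sum>b\<in>below c. Dp s f b * g (msub c b))"
      by (rule sum.cong) (auto simp: Dp_def madd_def msub_def ev_def fun_eq_iff)
    finally show ?thesis by (simp add: pmult_alt)
  qed
  also have "(\<Sum>a\<in>below ?c'. f a * g (msub ?c' a) * of_nat (c s + 1 - a s)) = pmult f (Dp s g) c"
  proof -
    have "(\<Sum>a\<in>below ?c'. f a * g (msub ?c' a) * of_nat (c s + 1 - a s))
        = (\<Sum>a\<in>below c. f a * g (msub ?c' a) * of_nat (c s + 1 - a s))"
    proof (rule sum.mono_neutral_right)
      show "finite (below ?c')" by (rule finite_below)
      show "below c \<subseteq> below ?c'" by (auto simp: below_def madd_def ev_def) (metis le_SucI)
      show "\<forall>a\<in>below ?c' - below c. f a * g (msub ?c' a) * of_nat (c s + 1 - a s) = 0"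
      proof
        fix a assume a: "a \<in> below ?c' - below c"
        then obtain i where i: "\<not> a i \<le> c i" by (auto simp: below_def)
        have "a i \<le> c i + (if i = s then 1 else 0)" using a by (auto simp: below_def madd_def ev_def)
        with i have "i = s" "a s = c s + 1" by (auto split: if_splits)
        then show "f a * g (msub ?c' a) * of_nat (c s + 1 - a s) = 0" by simp
      qed
    qed
    also have "\<dots> = (\<Sum>a\<in>below c. f a * Dp s g (msub c a))"
      by (rule sum.cong) (auto simp: Dp_def madd_def msub_def ev_def fun_eq_iff below_def Suc_diff_le)
    finally show ?thesis by (simp add: pmult_alt)
  qed
  finally show "Dp s (pmult f g) c = pmult (Dp s f) g c + pmult f (Dp s g) c" .
qed

lemma facm_zm: "facm zm = 1" by (simp add: facm_def zm_def)

lemma facm_step: "facm (madd c (ev s)) = facm c * of_nat (c s + 1)"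
proof -
  have "facm (madd c (ev s)) = (\<Prod>i\<in>UNIV. of_nat (fact (c i)) * (if i = s then of_nat (c s + 1) else 1))"
    unfolding facm_def by (rule prod.cong) (auto simp: madd_def ev_def algebra_simps)
  also have "\<dots> = facm c * of_nat (c s + 1)"
    by (simp add: prod.distrib facm_def)
  finally show ?thesis .
qed

lemma Dp_fac: "Dp s h c * facm c = h (madd c (ev s)) * facm (madd c (ev s))"
  by (simp add: Dp_def facm_step)

lemma Dp_zm: "Dp s h zm = h (madd zm (ev s)) * facm (madd zm (ev s))"
  using Dp_fac[of s h zm] by (simp add: facm_zm)

lemma Dp_fac': "Dp s h c = h (madd c (ev s)) * facm (madd c (ev s)) / facm c"
proof -
  have "facm c \<noteq> 0" by (simp add: facm_def)
  then show ?thesis using Dp_fac[of s h c] by (simp add: field_simps)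
qed

lemma mdeg_madd: "mdeg (madd a b) = mdeg a + mdeg b"
  by (simp add: mdeg_def madd_def sum.distrib)

lemma mdeg_ev: "mdeg (ev s) = 1"
  by (simp add: mdeg_def ev_def)

lemma mdeg_zm: "mdeg zm = 0"
  by (simp add: mdeg_def zm_def)

definition m2 :: "4 \<Rightarrow> 4 \<Rightarrow> mon" where "m2 s t = madd (madd zm (ev s)) (ev t)"
definition m3 :: "4 \<Rightarrow> 4 \<Rightarrow> 4 \<Rightarrow> mon" where "m3 s t u = madd (madd (madd zm (ev s)) (ev t)) (ev u)"
definition m4 :: "4 \<Rightarrow> 4 \<Rightarrow> 4 \<Rightarrow> 4 \<Rightarrow> mon" where
  "m4 s t u v = madd (madd (madd (madd zm (ev s)) (ev t)) (ev u)) (ev v)"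

lemma chain4: "Dp s (Dp t (Dp u (Dp v F))) zm = F (m4 s t u v) * facm (m4 s t u v)"
  by (simp add: Dp_zm Dp_fac m4_def)

lemma qmat_sym: "qmat q $ s $ t = qmat q $ t $ s"
proof -
  have "(\<lambda>k. (if k = s then 1 else 0) + (if k = t then 1 else 0)) = (\<lambda>k. (if k = t then 1 else 0) + (if k = s then (1::nat) else 0))"
    by (auto simp: fun_eq_iff)
  then show ?thesis by (simp add: qmat_def eq_commute[of s t])
qed

lemma facm_m2: "facm (m2 s t) = (if s = t then 2 else 1)"
  unfolding m2_def facm_step facm_zm by (simp add: madd_def zm_def ev_def)

lemma q_m2: "q (m2 s t) * facm (m2 s t) = 2 * qmat q $ s $ t"
proof -
  have "m2 s t = (\<lambda>k. (if k = s then 1 else 0) + (if k = t then 1 else 0))"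
    by (simp add: m2_def madd_def zm_def ev_def fun_eq_iff)
  then show ?thesis unfolding facm_m2 by (simp add: qmat_def)
qed

context
  fixes q :: poly4
  assumes hq: "homog 2 q"
begin

lemma q_zero: "mdeg a \<noteq> 2 \<Longrightarrow> q a = 0"
  using hq by (auto simp: homog_def)

lemma q0: "q zm = 0" by (rule q_zero) (simp add: mdeg_zm)
lemma q1: "Dp a q zm = 0"
  by (simp add: Dp_zm q_zero mdeg_madd mdeg_ev mdeg_zm)
lemma q2: "Dp a (Dp b q) zm = 2 * qmat q $ a $ b"
  using q_m2[of q a b] by (simp add: Dp_zm Dp_fac m2_def)
lemma q3: "Dp a (Dp b (Dp c q)) zm = 0"
  by (simp add: Dp_zm Dp_fac q_zero mdeg_madd mdeg_ev mdeg_zm)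
lemma q4: "Dp a (Dp b (Dp c (Dp d q))) zm = 0"
  by (simp add: Dp_zm Dp_fac q_zero mdeg_madd mdeg_ev mdeg_zm)

lemma KEY: "pmult q q (m4 s t u v) * facm (m4 s t u v) =
   8 * (qmat q $ s $ t * qmat q $ u $ v + qmat q $ s $ u * qmat q $ t $ v + qmat q $ s $ v * qmat q $ t $ u)"
proof -
  have "pmult q q (m4 s t u v) * facm (m4 s t u v) = Dp s (Dp t (Dp u (Dp v (pmult q q)))) zm"
    by (simp add: chain4)
  also have "\<dots> = 8 * (qmat q $ s $ t * qmat q $ u $ v + qmat q $ s $ u * qmat q $ t $ v + qmat q $ s $ v * qmat q $ t $ u)"
    by (simp add: Dp_leibniz Dp_add pmult_zm q0 q1 q2 q3 q4 algebra_simps qmat_sym[of q _ s] qmat_sym[of q v] qmat_sym[of q u t])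
  finally show ?thesis .
qed

end

definition lincomb :: "'x set \<Rightarrow> ('x \<Rightarrow> complex) \<Rightarrow> ('x \<Rightarrow> mon) \<Rightarrow> poly4" where
  "lincomb X c \<phi> = (\<lambda>m. \<Sum>x\<in>X. c x * (if m = \<phi> x then 1 else 0))"

lemma lincomb_supp: "{a. lincomb X c \<phi> a \<noteq> 0} \<subseteq> \<phi> ` X"
proof
  fix a assume "a \<in> {a. lincomb X c \<phi> a \<noteq> 0}"
  then have "(\<Sum>x\<in>X. c x * (if a = \<phi> x then 1 else 0)) \<noteq> 0" by (simp add: lincomb_def)
  then obtain x where "x \<in> X" "c x * (if a = \<phi> x then 1 else 0) \<noteq> 0"
    by (meson sum.neutral)
  then show "a \<in> \<phi> ` X" by (auto split: if_splits)
qed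

lemma lincomb_sum:
  assumes "finite X"
  shows "(\<Sum>a\<in>\<phi> ` X. lincomb X c \<phi> a * F a) = (\<Sum>x\<in>X. c x * F (\<phi> x))"
proof -
  have "(\<Sum>a\<in>\<phi> ` X. lincomb X c \<phi> a * F a) = (\<Sum>a\<in>\<phi> ` X. \<Sum>x\<in>X. (if a = \<phi> x then c x * F (\<phi> x) else 0))"
    unfolding lincomb_def sum_distrib_right by (rule sum.cong) (auto intro: sum.cong)
  also have "\<dots> = (\<Sum>x\<in>X. \<Sum>a\<in>\<phi> ` X. (if a = \<phi> x then c x * F (\<phi> x) else 0))"
    by (rule sum.swap)
  also have "\<dots> = (\<Sum>x\<in>X. c x * F (\<phi> x))"
    using assms by (simp add: sum.delta)
  finally show ?thesis .
qed

lemma is_poly_lincomb: "finite X \<Longrightarrow> is_poly (lincomb X c \<phi>)"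
  unfolding is_poly_def by (rule finite_subset[OF lincomb_supp]) simp

lemma papply_lincomb:
  assumes "finite X"
  shows "papply (lincomb X c \<phi>) f d = (\<Sum>x\<in>X. c x * (f (madd (\<phi> x) d) * (facm (madd (\<phi> x) d) / facm d)))"
proof -
  have pr: "(\<Prod>i\<in>UNIV. of_nat (fact (a i + d i)) / of_nat (fact (d i)) :: complex) = facm (madd a d) / facm d" for a
    by (simp add: prod_dividef facm_def madd_def)
  have "papply (lincomb X c \<phi>) f d = (\<Sum>a\<in>{a. lincomb X c \<phi> a \<noteq> 0}. lincomb X c \<phi> a * (f (madd a d) * (facm (madd a d) / facm d)))"
    unfolding papply_def pr by (simp add: madd_def mult.assoc)
  also have "\<dots> = (\<Sum>a\<in>\<phi> ` X. lincomb X c \<phi> a * (f (madd a d) * (facm (madd a d) / facm d)))"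
    by (rule sum.mono_neutral_left) (use assms lincomb_supp[of X c \<phi>] in auto)
  also have "\<dots> = (\<Sum>x\<in>X. c x * (f (madd (\<phi> x) d) * (facm (madd (\<phi> x) d) / facm d)))"
    using assms by (rule lincomb_sum)
  finally show ?thesis .
qed

lemma peval_lincomb:
  assumes "finite X"
  shows "peval (lincomb X c \<phi>) v = (\<Sum>x\<in>X. c x * (\<Prod>i\<in>UNIV. (v $ i) ^ (\<phi> x i)))"
proof -
  have "peval (lincomb X c \<phi>) v = (\<Sum>a\<in>\<phi> ` X. lincomb X c \<phi> a * (\<Prod>i\<in>UNIV. (v $ i) ^ (a i)))"
    unfolding peval_def by (rule sum.mono_neutral_left) (use assms lincomb_supp[of X c \<phi>] in auto)
  also have "\<dots> = (\<Sum>x\<in>X. c x * (\<Prod>i\<in>UNIV. (v $ i) ^ (\<phi> x i)))" using assms by (rule lincomb_sum)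
  finally show ?thesis .
qed

lemma lincomb_in_ideal:
  assumes "finite X" and deg: "\<And>x. x \<in> X \<Longrightarrow> mdeg (\<phi> x) = k"
    and van: "\<And>v. v \<in> G \<Longrightarrow> peval (lincomb X c \<phi>) v = 0"
  shows "lincomb X c \<phi> \<in> ideal_of_points G"
proof -
  have "peval (hcomp d (lincomb X c \<phi>)) v = 0" if "v \<in> G" for d v
  proof (cases "d = k")
    case True
    have "hcomp d (lincomb X c \<phi>) = lincomb X c \<phi>"
    proof
      fix a show "hcomp d (lincomb X c \<phi>) a = lincomb X c \<phi> a"
        using lincomb_supp[of X c \<phi>] deg True by (auto simp: hcomp_def)
    qed
    then show ?thesis using van that by simp
  next
    case False
    have "hcomp d (lincomb X c \<phi>) = (\<lambda>_. 0)"
    proof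
      fix a show "hcomp d (lincomb X c \<phi>) a = 0"
        using lincomb_supp[of X c \<phi>] deg False by (auto simp: hcomp_def)
    qed
    then show ?thesis by (simp add: peval_def)
  qed
  then show ?thesis using is_poly_lincomb[OF assms(1)] by (simp add: ideal_of_points_def)
qed

lemma prod_pow_step: "(\<Prod>i\<in>UNIV. (v $ i) ^ (madd a (ev s) i)) = (\<Prod>i\<in>UNIV. (v $ i) ^ (a i)) * (v $ s :: complex)"
proof -
  have "(\<Prod>i\<in>UNIV. (v $ i) ^ (madd a (ev s) i)) = (\<Prod>i\<in>UNIV. (v $ i) ^ (a i) * (if i = s then v $ s else 1))"
    by (rule prod.cong) (auto simp: madd_def ev_def)
  then show ?thesis by (simp add: prod.distrib)
qed

lemma prod_pow_zm: "(\<Prod>i\<in>UNIV. (v $ i) ^ (zm i)) = (1::complex)"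
  by (simp add: zm_def)

lemma mdeg_m2: "mdeg (m2 s t) = 2" by (simp add: m2_def mdeg_madd mdeg_ev mdeg_zm)
lemma mdeg_m3: "mdeg (m3 s t u) = 3" by (simp add: m3_def mdeg_madd mdeg_ev mdeg_zm)

lemma madd_m2_m2: "madd (m2 s t) (m2 i k) = m4 s t i k"
  by (simp add: m2_def m4_def madd_def zm_def fun_eq_iff)
lemma madd_m3_m1: "madd (m3 r s t) (madd zm (ev i)) = m4 r s t i"
  by (simp add: m3_def m4_def madd_def zm_def fun_eq_iff)

lemma sum_prodU: "(\<Sum>x\<in>UNIV. h x) = (\<Sum>a\<in>UNIV. \<Sum>b\<in>UNIV. h (a,b))"
  for h :: "('a::finite \<times> 'b::finite) \<Rightarrow> 'c::comm_monoid_add"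
  by (simp add: sum.cartesian_product)

definition quadval :: "complex^4^4 \<Rightarrow> complex^4 \<Rightarrow> complex" where
  "quadval B v = (\<Sum>s\<in>UNIV. \<Sum>t\<in>UNIV. B $ s $ t * v $ s * v $ t)"

definition linval :: "complex^4 \<Rightarrow> complex^4 \<Rightarrow> complex" where
  "linval a v = (\<Sum>r\<in>UNIV. a $ r * v $ r)"

lemma quad_cond:
  fixes q :: poly4
  assumes hq: "homog 2 q" and ap: "apolar G (pmult q q)"
    and van: "\<And>v. v \<in> G \<Longrightarrow> quadval B v = 0"
  shows "(\<Sum>s\<in>UNIV. \<Sum>t\<in>UNIV. B $ s $ t * (qmat q $ s $ t * qmat q $ i $ k + qmat q $ s $ i * qmat q $ t $ k + qmat q $ s $ k * qmat q $ t $ i)) = 0"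
proof -
  let ?g = "lincomb (UNIV :: (4 \<times> 4) set) (\<lambda>(s,t). B $ s $ t) (\<lambda>(s,t). m2 s t)"
  have pe: "peval ?g v = quadval B v" for v
    by (simp add: peval_lincomb quadval_def m2_def prod_pow_step prod_pow_zm sum_prodU[where 'a=4 and 'b=4] algebra_simps)
  have "?g \<in> ideal_of_points G"
    by (rule lincomb_in_ideal[where k=2]) (auto simp: mdeg_m2 pe van)
  then have "papply ?g (pmult q q) (m2 i k) = 0" using ap by (simp add: apolar_def)
  moreover have "papply ?g (pmult q q) (m2 i k) = (\<Sum>s\<in>UNIV. \<Sum>t\<in>UNIV. B $ s $ t * (8 * (qmat q $ s $ t * qmat q $ i $ k + qmat q $ s $ i * qmat q $ t $ k + qmat q $ s $ k * qmat q $ t $ i)) / facm (m2 i k))"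
    by (simp add: papply_lincomb madd_m2_m2 KEY[OF hq] sum_prodU[where 'a=4 and 'b=4])
  moreover have "(\<Sum>s\<in>UNIV. \<Sum>t\<in>UNIV. B $ s $ t * (8 * (qmat q $ s $ t * qmat q $ i $ k + qmat q $ s $ i * qmat q $ t $ k + qmat q $ s $ k * qmat q $ t $ i)) / facm (m2 i k))
     = 8 / facm (m2 i k) * (\<Sum>s\<in>UNIV. \<Sum>t\<in>UNIV. B $ s $ t * (qmat q $ s $ t * qmat q $ i $ k + qmat q $ s $ i * qmat q $ t $ k + qmat q $ s $ k * qmat q $ t $ i))"
    by (simp add: sum_distrib_left algebra_simps add_divide_distrib)
  moreover have "facm (m2 i k) \<noteq> 0" by (simp add: facm_m2)
  ultimately show ?thesis by simp
qed

lemma facm_m1: "facm (madd zm (ev i)) = 1"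
  unfolding facm_step facm_zm by (simp add: zm_def)

lemma cub_cond:
  fixes q :: poly4
  assumes hq: "homog 2 q" and ap: "apolar G (pmult q q)"
    and van: "\<And>v. v \<in> G \<Longrightarrow> linval a v * quadval B v = 0"
  shows "(\<Sum>r\<in>UNIV. \<Sum>s\<in>UNIV. \<Sum>t\<in>UNIV. a $ r * B $ s $ t * (qmat q $ r $ s * qmat q $ t $ i + qmat q $ r $ t * qmat q $ s $ i + qmat q $ r $ i * qmat q $ s $ t)) = 0"
proof -
  let ?g = "lincomb (UNIV :: (4 \<times> 4 \<times> 4) set) (\<lambda>(r,s,t). a $ r * B $ s $ t) (\<lambda>(r,s,t). m3 r s t)"
  have lq: "linval a v * quadval B v = (\<Sum>r\<in>UNIV. \<Sum>s\<in>UNIV. \<Sum>t\<in>UNIV. a $ r * B $ s $ t * (v $ r * v $ s * v $ t))" for v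
    unfolding linval_def quadval_def by (simp only: sum_distrib_right) (simp add: sum_distrib_left mult_ac)
  have pe: "peval ?g v = linval a v * quadval B v" for v
    unfolding lq by (simp add: peval_lincomb m3_def prod_pow_step prod_pow_zm sum_prodU[where 'a=4 and 'b="4\<times>4"] sum_prodU[where 'a=4 and 'b=4] mult_ac)
  have "?g \<in> ideal_of_points G"
    by (rule lincomb_in_ideal[where k=3]) (auto simp: mdeg_m3 pe van)
  then have "papply ?g (pmult q q) (madd zm (ev i)) = 0" using ap by (simp add: apolar_def)
  moreover have "papply ?g (pmult q q) (madd zm (ev i)) = (\<Sum>r\<in>UNIV. \<Sum>s\<in>UNIV. \<Sum>t\<in>UNIV. a $ r * B $ s $ t * (8 * (qmat q $ r $ s * qmat q $ t $ i + qmat q $ r $ t * qmat q $ s $ i + qmat q $ r $ i * qmat q $ s $ t)))"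
    by (simp add: papply_lincomb madd_m3_m1 KEY[OF hq] facm_m1 sum_prodU[where 'a=4 and 'b="4\<times>4"] sum_prodU[where 'a=4 and 'b=4] mult.assoc)
  moreover have "(\<Sum>r\<in>UNIV. \<Sum>s\<in>UNIV. \<Sum>t\<in>UNIV. a $ r * B $ s $ t * (8 * (qmat q $ r $ s * qmat q $ t $ i + qmat q $ r $ t * qmat q $ s $ i + qmat q $ r $ i * qmat q $ s $ t)))
     = 8 * (\<Sum>r\<in>UNIV. \<Sum>s\<in>UNIV. \<Sum>t\<in>UNIV. a $ r * B $ s $ t * (qmat q $ r $ s * qmat q $ t $ i + qmat q $ r $ t * qmat q $ s $ i + qmat q $ r $ i * qmat q $ s $ t))"
    by (simp add: sum_distrib_left algebra_simps)
  ultimately show ?thesis by simp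
qed

definition bil :: "complex^4^4 \<Rightarrow> complex^4 \<Rightarrow> complex^4 \<Rightarrow> complex" where
  "bil B x y = (\<Sum>s\<in>UNIV. \<Sum>t\<in>UNIV. B $ s $ t * x $ s * y $ t)"

lemma quadval_bil: "quadval B v = bil B v v" by (simp add: quadval_def bil_def)

lemma mv_scale: "(A::complex^'n^'m) *v (c *s x) = c *s (A *v x)"
  by (simp add: vec_eq_iff matrix_vector_mult_def sum_distrib_left algebra_simps)
lemma mv_add: "(A::complex^'n^'m) *v (x + y) = A *v x + A *v y"
  by (simp add: vec_eq_iff matrix_vector_mult_def sum.distrib algebra_simps)
lemma mv_diff: "(A::complex^'n^'m) *v (x - y) = A *v x - A *v y"
  by (simp add: vec_eq_iff matrix_vector_mult_def sum_subtractf algebra_simps)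

lemma conv_quad:
  fixes B M :: "complex^4^4"
  shows "(\<Sum>s\<in>UNIV. \<Sum>t\<in>UNIV. B $ s $ t * (M $ s $ t * M $ i $ k + M $ s $ i * M $ t $ k + M $ s $ k * M $ t $ i))
    = (\<Sum>s\<in>UNIV. \<Sum>t\<in>UNIV. B $ s $ t * M $ s $ t) * M $ i $ k + (transpose M ** B ** M) $ i $ k + (transpose M ** transpose B ** M) $ i $ k"
  by (simp add: sum_4 matrix_matrix_mult_def transpose_def algebra_simps)

lemma conv_cub:
  fixes B M :: "complex^4^4"
  shows "(\<Sum>r\<in>UNIV. \<Sum>s\<in>UNIV. \<Sum>t\<in>UNIV. a $ r * B $ s $ t * (M $ r $ s * M $ t $ i + M $ r $ t * M $ s $ i + M $ r $ i * M $ s $ t))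
    = ((transpose M ** transpose B ** transpose M) *v a) $ i + ((transpose M ** B ** transpose M) *v a) $ i
      + (\<Sum>s\<in>UNIV. \<Sum>t\<in>UNIV. B $ s $ t * M $ s $ t) * (transpose M *v a) $ i"
  by (simp add: sum_4 matrix_matrix_mult_def matrix_vector_mult_def transpose_def algebra_simps)

definition sm :: "complex \<Rightarrow> complex^4^4 \<Rightarrow> complex^4^4" where
  "sm c X = (\<chi> i j. c * X $ i $ j)"

lemma sm_mul_right: "A ** sm c X = sm c (A ** X)"
  by (simp add: sm_def vec_eq_iff matrix_matrix_mult_def sum_distrib_left algebra_simps)
lemma sm_mul_left: "sm c X ** A = sm c (X ** A)"
  by (simp add: sm_def vec_eq_iff matrix_matrix_mult_def sum_distrib_left algebra_simps)

lemma sym_ent: "transpose A = A \<Longrightarrow> A $ t $ s = A $ s $ t"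
  by (metis transpose_def vec_lambda_beta)

context
  fixes M N :: "complex^4^4"
  assumes NM: "N ** M = mat 1" and MN: "M ** N = mat 1" and Ms: "transpose M = M"
begin

lemma Ns: "transpose N = N"
proof -
  have "transpose N ** M = mat 1"
    using MN by (metis Ms matrix_transpose_mul transpose_mat)
  then have "transpose N ** M ** N = N" by simp
  then show ?thesis using MN by (simp add: matrix_mul_assoc[symmetric])
qed

lemma trace_NM: "(\<Sum>s\<in>UNIV. \<Sum>t\<in>UNIV. N $ s $ t * M $ s $ t) = 4"
proof -
  have "(\<Sum>s\<in>UNIV. \<Sum>t\<in>UNIV. N $ s $ t * M $ s $ t) = (\<Sum>s\<in>UNIV. (N ** M) $ s $ s)"
    by (simp add: matrix_matrix_mult_def sym_ent[OF Ms])
  also have "\<dots> = 4" by (simp add: NM mat_def)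
  finally show ?thesis .
qed

lemma LA1:
  assumes Bs: "transpose B = B"
    and hyp: "\<And>i k. (\<Sum>s\<in>UNIV. \<Sum>t\<in>UNIV. B $ s $ t * (M $ s $ t * M $ i $ k + M $ s $ i * M $ t $ k + M $ s $ k * M $ t $ i)) = 0"
  shows "B = 0"
proof -
  define \<tau> where "\<tau> = (\<Sum>s\<in>UNIV. \<Sum>t\<in>UNIV. B $ s $ t * M $ s $ t)"
  define c where "c = - \<tau> / 2"
  have P: "M ** B ** M = sm c M"
  proof (simp add: vec_eq_iff, intro allI)
    fix i k
    have "\<tau> * M $ i $ k + 2 * (M ** B ** M) $ i $ k = 0"
      using hyp[of i k] unfolding conv_quad Ms Bs \<tau>_def by (simp add: add.commute)
    then have "2 * (M ** B ** M) $ i $ k = - (\<tau> * M $ i $ k)" by (simp add: eq_neg_iff_add_eq_0 add.commute)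
    then show "(M ** B ** M) $ i $ k = sm c M $ i $ k"
      by (simp add: sm_def c_def field_simps)
  qed
  have "B = (N ** M) ** B ** (M ** N)" by (simp add: NM MN)
  also have "\<dots> = N ** (M ** B ** M) ** N" by (simp add: matrix_mul_assoc)
  also have "\<dots> = sm c N" unfolding P sm_mul_right sm_mul_left using NM by (simp add: matrix_mul_assoc[symmetric])
  finally have B: "B = sm c N" .
  have "\<tau> = c * 4"
    unfolding \<tau>_def B trace_NM[symmetric] by (simp add: sm_def sum_distrib_left algebra_simps)
  then have "\<tau> = 0" by (simp add: c_def)
  then show "B = 0" using B by (simp add: c_def sm_def vec_eq_iff)
qed

end

definition dotv :: "complex^4 \<Rightarrow> complex^4 \<Rightarrow> complex" where
  "dotv x y = (\<Sum>i\<in>UNIV. x $ i * y $ i)"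

lemma linval_dotv: "linval a v = dotv a v" by (simp add: linval_def dotv_def)
lemma dotv_comm: "dotv x y = dotv y x" by (simp add: dotv_def mult.commute)
lemma dotv_diff: "dotv (x - y) z = dotv x z - dotv y z" by (simp add: dotv_def sum_subtractf algebra_simps)
lemma dotv_add2: "dotv x (y + z) = dotv x y + dotv x z" by (simp add: dotv_def sum.distrib algebra_simps)
lemma dotv_scale: "dotv (c *s x) z = c * dotv x z" by (simp add: dotv_def sum_distrib_left algebra_simps)
lemma dotv_scale2: "dotv x (c *s z) = c * dotv x z" by (simp add: dotv_def sum_distrib_left algebra_simps)
lemma if_mult0: "(if P then a else 0) * b = (if P then a * b else (0::complex))" by simp
lemma mult_if0: "b * (if P then a else 0) = (if P then b * a else (0::complex))" by simp

lemma dotv_axis: "dotv (axis j c) w = c * w $ j" by (simp add: dotv_def axis_def if_mult0 mult_if0)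
lemma dotv_axis2: "dotv w (axis j c) = w $ j * c" by (simp add: dotv_def axis_def if_mult0 mult_if0)

lemma bil_dot: "bil A x y = dotv x (A *v y)"
  by (simp add: bil_def dotv_def matrix_vector_mult_def sum_distrib_left mult_ac)

lemma bil_sym: assumes "transpose A = A" shows "bil A x y = bil A y x"
proof -
  have "bil A x y = (\<Sum>t\<in>UNIV. \<Sum>s\<in>UNIV. A $ s $ t * x $ s * y $ t)" unfolding bil_def by (rule sum.swap)
  also have "\<dots> = bil A y x" unfolding bil_def by (simp add: sym_ent[OF assms] mult_ac)
  finally show ?thesis .
qed

lemma bil_left: assumes "transpose A = A" shows "bil A p y = dotv (A *v p) y"
  using bil_sym[OF assms, of p y] by (simp add: bil_dot dotv_comm)

lemma mv_axis_diag: "((K::complex^4^4) *v axis s 1) $ s = K $ s $ s"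
  by (simp add: matrix_vector_mult_def axis_def mult_if0)

lemma vec_nonzero: "(p::complex^4) \<noteq> 0 \<Longrightarrow> \<exists>i. p $ i \<noteq> 0"
  by (simp add: vec_eq_iff)

context
  fixes M N :: "complex^4^4"
  assumes NM: "N ** M = mat 1" and MN: "M ** N = mat 1" and Ms: "transpose M = M"
begin

lemma Ns': "transpose N = N" by (rule Ns[OF NM MN Ms])

lemma STRUCT:
  assumes p: "p \<noteq> 0" and Bs: "transpose B = B"
    and hyp: "\<And>a i. dotv a p = 0 \<Longrightarrow> (\<Sum>r\<in>UNIV. \<Sum>s\<in>UNIV. \<Sum>t\<in>UNIV. a $ r * B $ s $ t * (M $ r $ s * M $ t $ i + M $ r $ t * M $ s $ i + M $ r $ i * M $ s $ t)) = 0"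
  shows "\<exists>lam mu. (\<forall>x y. bil B x y = lam * bil N x y + mu * bil N x p * bil N y p) \<and> 6 * lam = - mu * bil N p p"
proof -
  define \<tau> where "\<tau> = (\<Sum>s\<in>UNIV. \<Sum>t\<in>UNIV. B $ s $ t * M $ s $ t)"
  define lam where "lam = - \<tau> / 2"
  define K where "K = B ** M"
  have Kker: "K *v a = lam *s a" if "dotv a p = 0" for a
  proof -
    have "M *v (K *v a) = M *v (lam *s a)"
    proof (simp add: vec_eq_iff, intro allI)
      fix i
      have "\<tau> * (M *v a) $ i + 2 * ((M ** B ** M) *v a) $ i = 0"
        using hyp[OF that, of i] unfolding conv_cub Ms Bs \<tau>_def by (simp add: algebra_simps)
      then have "2 * ((M ** B ** M) *v a) $ i = - (\<tau> * (M *v a) $ i)" by (simp add: eq_neg_iff_add_eq_0 add.commute)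
      then have "(M *v (K *v a)) $ i = - (\<tau> / 2) * (M *v a) $ i"
        unfolding K_def matrix_vector_mul_assoc by (simp add: field_simps matrix_mul_assoc)
      moreover have "(M *v (lam *s a)) $ i = lam * (M *v a) $ i" by (simp add: mv_scale)
      ultimately show "(M *v (K *v a)) $ i = (M *v (lam *s a)) $ i"
        by (simp add: lam_def)
    qed
    then have "N *v (M *v (K *v a)) = N *v (M *v (lam *s a))" by simp
    then show ?thesis by (simp add: matrix_vector_mul_assoc matrix_mul_assoc NM)
  qed
  obtain i0 where i0: "p $ i0 \<noteq> 0" using vec_nonzero[OF p] by blast
  define z where "z = axis i0 (1 / p $ i0)"
  have zp: "dotv z p = 1" using i0 by (simp add: z_def dotv_axis)
  define w where "w = K *v z - lam *s z"
  have Kx: "K *v x = lam *s x + dotv x p *s w" for x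
  proof -
    have "dotv (x - dotv x p *s z) p = 0" by (simp add: dotv_diff dotv_scale zp)
    then have "K *v (x - dotv x p *s z) = lam *s (x - dotv x p *s z)" by (rule Kker)
    then show ?thesis
      by (simp add: mv_diff mv_scale w_def vec_eq_iff algebra_simps)
  qed
  have BKN: "B = K ** N" by (simp add: K_def MN matrix_mul_assoc[symmetric])
  have star: "bil B x y = lam * bil N x y + bil N p y * dotv x w" for x y
  proof -
    have "B *v y = lam *s (N *v y) + dotv (N *v y) p *s w"
      unfolding BKN matrix_vector_mul_assoc[symmetric] Kx ..
    moreover have "dotv (N *v y) p = bil N p y" by (simp add: bil_dot dotv_comm)
    ultimately show ?thesis by (simp add: bil_dot dotv_add2 dotv_scale2)
  qed
  define u where "u = N *v p"
  have u0: "u \<noteq> 0"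
  proof
    assume "u = 0"
    then have "M *v u = 0" by simp
    then show False using p by (simp add: u_def matrix_vector_mul_assoc MN)
  qed
  obtain j0 where j0: "u $ j0 \<noteq> 0" using vec_nonzero[OF u0] by blast
  have bNp: "bil N p y = dotv u y" for y unfolding u_def by (rule bil_left[OF Ns'])
  define mu where "mu = w $ j0 / u $ j0"
  have xw: "dotv x w = mu * dotv u x" for x
  proof -
    have "bil B x (axis j0 1) = bil B (axis j0 1) x" by (rule bil_sym[OF Bs])
    then have "lam * bil N x (axis j0 1) + bil N p (axis j0 1) * dotv x w = lam * bil N (axis j0 1) x + bil N p x * dotv (axis j0 1) w"
      unfolding star .
    moreover have "bil N x (axis j0 1) = bil N (axis j0 1) x" by (rule bil_sym[OF Ns'])
    ultimately have "u $ j0 * dotv x w = dotv u x * w $ j0"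
      by (simp add: bNp dotv_axis dotv_axis2)
    then show ?thesis using j0 by (simp add: mu_def field_simps)
  qed
  have main: "bil B x y = lam * bil N x y + mu * bil N x p * bil N y p" for x y
  proof -
    have "bil N x p = dotv u x" using bNp[of x] bil_sym[OF Ns', of x p] by simp
    moreover have "bil N y p = dotv u y" using bNp[of y] bil_sym[OF Ns', of y p] by simp
    ultimately show ?thesis by (simp add: star bNp xw mult_ac)
  qed
  have "\<tau> = (\<Sum>s\<in>UNIV. K $ s $ s)"
    by (simp add: \<tau>_def K_def matrix_matrix_mult_def sym_ent[OF Ms])
  also have "\<dots> = (\<Sum>s\<in>UNIV. lam + p $ s * w $ s)"
    by (rule sum.cong) (simp_all add: mv_axis_diag[symmetric] Kx dotv_axis)
  also have "\<dots> = 4 * lam + dotv p w" by (simp add: sum.distrib dotv_def)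
  also have "\<dots> = 4 * lam + mu * bil N p p" by (simp add: xw bNp)
  finally have "\<tau> = 4 * lam + mu * bil N p p" .
  then have "6 * lam = - mu * bil N p p" by (simp add: lam_def field_simps)
  with main show ?thesis by blast
qed

end

lemma vec_dimension: "vec.dimension TYPE('a::field) TYPE('n::finite) = CARD('n)"
  using vec_dim_card[where 'a='a and 'n='n] by (simp add: vec.dimension_def)

lemma KER:
  fixes W :: "(complex^'n) set"
  assumes fW: "finite W" and cW: "card W < CARD('n)"
  shows "\<exists>x::complex^'n. x \<noteq> 0 \<and> (\<forall>w\<in>W. (\<Sum>i\<in>UNIV. w $ i * x $ i) = 0)"
proof -
  obtain f where f: "f ` W \<subseteq> (UNIV::'n set)" "inj_on f W"
    using card_le_inj[OF fW, of "UNIV::'n set"] cW by auto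
  define A :: "complex^'n^'n" where "A = (\<chi> i. if i \<in> f ` W then the_inv_into W f i else 0)"
  have rowA: "A $ (f w) = w" if "w \<in> W" for w
    using that f(2) by (simp add: A_def the_inv_into_f_f)
  have rows: "rows A \<subseteq> insert 0 W"
  proof
    fix r assume "r \<in> rows A"
    then obtain i where r: "r = row i A" by (auto simp: rows_def)
    have "row i A = A $ i" by (simp add: row_def vec_eq_iff)
    then show "r \<in> insert 0 W" using r f(2)
      by (auto simp: A_def the_inv_into_into)
  qed
  have "\<not> (\<exists>B. B ** A = mat 1)"
  proof
    assume "\<exists>B. B ** A = mat 1"
    then have sp: "vec.span (rows A) = UNIV" by (simp add: matrix_left_invertible_span_rows_gen)
    have "rows A \<subseteq> vec.span W" using rows vec.span_superset vec.span_zero by blast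
    then have "vec.span (rows A) \<subseteq> vec.span W"
      by (metis vec.span_mono vec.span_span)
    then have "(UNIV :: (complex^'n) set) \<subseteq> vec.span W" using sp by simp
    then have "vec.dim (UNIV :: (complex^'n) set) \<le> card W" using vec.dim_le_card fW by blast
    then show False using cW vec_dim_card[where 'a=complex and 'n='n] by simp
  qed
  then obtain x where x: "A *v x = 0" "x \<noteq> 0"
    using matrix_left_invertible_ker[of A] by blast
  have "(\<Sum>i\<in>UNIV. w $ i * x $ i) = 0" if "w \<in> W" for w
  proof -
    have "(A *v x) $ (f w) = 0" using x by simp
    then show ?thesis using rowA[OF that] by (simp add: matrix_vector_mult_def)
  qed
  then show ?thesis using x by blast
qed

lemma rank_inv:
  fixes M :: "complex^4^4"
  assumes "rank M = 4"
  shows "\<exists>N. N ** M = mat 1 \<and> M ** N = mat 1"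
proof -
  have "vec.dim (rows M) = vec.dimension TYPE(complex) TYPE(4)"
    using assms by (simp add: row_rank_def_gen vec_dimension)
  then have "vec.span (rows M) = UNIV" by (simp add: vec.dim_eq_full)
  then obtain N where "N ** M = mat 1" using matrix_left_invertible_span_rows_gen by blast
  then show ?thesis using matrix_left_right_inverse by blast
qed

lemma F2:
  assumes fG: "finite G" and cG: "card G = 10" and pG: "p \<in> G"
  shows "\<exists>B. transpose B = B \<and> B \<noteq> 0 \<and> (\<forall>v\<in>G-{p}. quadval B v = 0)"
proof -
  define phi :: "complex^4 \<Rightarrow> complex^(4\<times>4)" where "phi v = (\<chi> st. v $ fst st * v $ snd st)" for v
  define sg :: "4\<times>4 \<Rightarrow> complex^(4\<times>4)" where
    "sg il = (\<chi> st. (if st = il then 1 else 0) - (if st = (snd il, fst il) then 1 else 0))" for il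
  define L :: "(4\<times>4) list" where "L = [(1,2),(1,3),(1,4),(2,3),(2,4),(3,4)]"
  define W where "W = phi ` (G - {p}) \<union> sg ` set L"
  have fW: "finite W" using fG by (simp add: W_def)
  have "card (G - {p}) = 9" using cG pG by (simp add: card_Diff_singleton)
  then have "card (G - {p}) \<le> 9" by simp
  then have c1: "card (phi ` (G - {p})) \<le> 9" by (meson card_image_le fG finite_Diff le_trans)
  have "card (set L) \<le> 6" using card_length[of L] by (simp add: L_def)
  then have c2: "card (sg ` set L) \<le> 6" by (meson card_image_le List.finite_set le_trans)
  have "card W \<le> 15" unfolding W_def using c1 c2 card_Un_le[of "phi ` (G - {p})" "sg ` set L"] by simp
  then have cW: "card W < CARD(4\<times>4)" by simp
  obtain x :: "complex^(4\<times>4)" where x0: "x \<noteq> 0" and xW: "\<And>w. w \<in> W \<Longrightarrow> (\<Sum>i\<in>UNIV. w $ i * x $ i) = 0"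
    using KER[OF fW cW] by blast
  define B :: "complex^4^4" where "B = (\<chi> s t. x $ (s,t))"
  have sy: "x $ (i,l) = x $ (l,i)" if "(i,l) \<in> set L" for i l
  proof -
    have ne: "i \<noteq> l" using that by (auto simp: L_def)
    have "sg (i,l) \<in> W" using that by (simp add: W_def)
    then have "(\<Sum>st\<in>UNIV. sg (i,l) $ st * x $ st) = 0" by (rule xW)
    moreover have "(\<Sum>st\<in>UNIV. sg (i,l) $ st * x $ st) = x $ (i,l) - x $ (l,i)"
    proof -
      have "(\<Sum>st\<in>UNIV. sg (i,l) $ st * x $ st) = (\<Sum>st\<in>UNIV. (if st = (i,l) then x $ st else 0) - (if st = (l,i) then x $ st else 0))"
        by (rule sum.cong[OF refl]) (simp only: sg_def vec_lambda_beta left_diff_distrib if_mult0 mult_1_left fst_conv snd_conv)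
      also have "\<dots> = x $ (i,l) - x $ (l,i)"
        by (simp only: sum_subtractf sum.delta) simp
      finally show ?thesis .
    qed
    ultimately show ?thesis by simp
  qed
  have e: "x$(1,2) = x$(2,1)" "x$(1,3) = x$(3,1)" "x$(1,4) = x$(4,1)" "x$(2,3) = x$(3,2)" "x$(2,4) = x$(4,2)" "x$(3,4) = x$(4,3)"
    by (rule sy, simp add: L_def)+
  have "\<forall>s t::4. x $ (s,t) = x $ (t,s)"
    unfolding forall_4 by (simp add: e)
  then have Bs: "transpose B = B" by (simp add: B_def transpose_def vec_eq_iff)
  have B0: "B \<noteq> 0"
  proof
    assume "B = 0"
    have xst: "x $ (s,t) = 0" for s t
    proof -
      have "B $ s $ t = 0" using \<open>B = 0\<close> by simp
      then show ?thesis by (simp add: B_def)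
    qed
    have "x = 0" unfolding vec_eq_iff
    proof (rule allI)
      fix st :: "4 \<times> 4"
      obtain s t where "st = (s,t)" by (cases st)
      then show "x $ st = 0 $ st" using xst by simp
    qed
    then show False using x0 by simp
  qed
  have "quadval B v = 0" if "v \<in> G - {p}" for v
  proof -
    have "phi v \<in> W" using that by (simp add: W_def)
    then have "(\<Sum>st\<in>UNIV. phi v $ st * x $ st) = 0" by (rule xW)
    moreover have "(\<Sum>st\<in>UNIV. phi v $ st * x $ st) = quadval B v"
      by (simp add: phi_def B_def quadval_def sum_prodU[where 'a=4 and 'b=4] mult_ac)
    ultimately show ?thesis by simp
  qed
  then show ?thesis using Bs B0 by blast
qed

definition outer :: "complex^4 \<Rightarrow> complex^4^4" where "outer u = (\<chi> s t. u $ s * u $ t)"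

lemma bil_diffM: "bil (A - B) x y = bil A x y - bil B x y"
  by (simp add: bil_def sum_subtractf algebra_simps)
lemma bil_addM: "bil (A + B) x y = bil A x y + bil B x y"
  by (simp add: bil_def sum.distrib algebra_simps)
lemma bil_zeroM: "bil 0 x y = 0"
  by (simp add: bil_def)
lemma bil_sumM: "finite S \<Longrightarrow> bil (\<Sum>j\<in>S. A j) x y = (\<Sum>j\<in>S. bil (A j) x y)"
  by (induction S rule: finite_induct) (simp_all add: bil_zeroM bil_addM)
lemma bil_sm: "bil (sm c A) x y = c * bil A x y"
  by (simp add: bil_def sm_def sum_distrib_left algebra_simps)
lemma bil_outer: "bil (outer u) x y = dotv u x * dotv u y"
  by (simp add: bil_def outer_def dotv_def sum_product algebra_simps)

lemma bil_axis: "bil A (axis s 1) (axis t 1) = A $ s $ t"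
proof -
  have "bil A (axis s 1) (axis t 1) = (\<Sum>s'\<in>UNIV. \<Sum>t'\<in>UNIV. (if s' = s then (if t' = t then A $ s' $ t' else 0) else 0))"
    unfolding bil_def by (rule sum.cong[OF refl], rule sum.cong[OF refl]) (simp add: axis_def)
  also have "\<dots> = (\<Sum>s'\<in>UNIV. (if s' = s then A $ s' $ t else 0))"
    by (rule sum.cong[OF refl]) (simp add: sum.delta)
  also have "\<dots> = A $ s $ t" by (simp add: sum.delta)
  finally show ?thesis .
qed

lemma sym_from_bil: "(\<And>x y. bil A x y = bil A y x) \<Longrightarrow> transpose A = A"
  by (simp add: vec_eq_iff transpose_def) (metis bil_axis)

lemma sum_pm:
  fixes \<zeta> :: "'j \<Rightarrow> complex"
  assumes "finite R" "\<forall>j\<in>R. (\<zeta> j)^2 = z^2"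
  shows "\<exists>m::int. sum \<zeta> R = of_int m * z"
  using assms
proof (induction R rule: finite_induct)
  case empty
  have "sum \<zeta> {} = of_int 0 * z" by simp
  then show ?case by blast
next
  case (insert a F)
  then obtain m where m: "sum \<zeta> F = of_int m * z" by auto
  have "\<zeta> a = z \<or> \<zeta> a = - z" using insert(4) by (simp add: power2_eq_iff)
  then show ?case
  proof
    assume "\<zeta> a = z"
    then show ?thesis using insert(1,2) m by (intro exI[of _ "m + 1"]) (simp add: algebra_simps)
  next
    assume "\<zeta> a = - z"
    then show ?thesis using insert(1,2) m by (intro exI[of _ "m - 1"]) (simp add: algebra_simps)
  qed
qed

lemma no_int_sq: "(2::int) * m^2 \<noteq> 3"
proof
  assume "2 * m^2 = 3"
  then have "even (3::int)" by (metis dvd_triv_left)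
  then show False by simp
qed

lemma FINAL:
  fixes G :: "(complex^4) set" and N :: "complex^4^4"
  assumes Ns: "transpose N = N" and fG: "finite G" and cG: "card G = 10"
    and QZ: "\<And>B. transpose B = B \<Longrightarrow> (\<forall>v\<in>G. quadval B v = 0) \<Longrightarrow> B = 0"
    and nz: "\<And>p. p \<in> G \<Longrightarrow> bil N p p \<noteq> 0"
    and E1: "\<And>p k. p \<in> G \<Longrightarrow> k \<in> G \<Longrightarrow> k \<noteq> p \<Longrightarrow> (bil N k p)^2 = bil N p p * bil N k k / 6"
  shows False
proof -
  define n where "n j = bil N j j" for j
  define c where "c j = 6 / (5 * n j)" for j
  have bs: "bil N x y = bil N y x" for x y by (rule bil_sym[OF Ns])
  have du: "dotv (N *v j) x = bil N x j" for j x using bil_left[OF Ns, of j x] bs by simp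
  define X where "X = N - (\<Sum>j\<in>G. sm (c j) (outer (N *v j) - sm (n j / 6) N))"
  have BX: "bil X x y = bil N x y - (\<Sum>j\<in>G. c j * (bil N x j * bil N y j - n j / 6 * bil N x y))" for x y
    by (simp add: X_def bil_diffM bil_sumM[OF fG] bil_sm bil_outer du)
  have Xs: "transpose X = X"
    by (rule sym_from_bil) (simp add: BX bs mult.commute)
  have qX: "quadval X v = 0" if v: "v \<in> G" for v
  proof -
    have nv: "n v \<noteq> 0" using nz[OF v] by (simp add: n_def)
    have "(\<Sum>j\<in>G. c j * (bil N v j * bil N v j - n j / 6 * bil N v v))
        = c v * (bil N v v * bil N v v - n v / 6 * bil N v v) + (\<Sum>j\<in>G-{v}. c j * (bil N v j * bil N v j - n j / 6 * bil N v v))"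
      by (rule sum.remove[OF fG v])
    also have "(\<Sum>j\<in>G-{v}. c j * (bil N v j * bil N v j - n j / 6 * bil N v v)) = 0"
    proof (rule sum.neutral, rule ballI)
      fix j assume j: "j \<in> G - {v}"
      have "bil N v j * bil N v j = n j * n v / 6"
      proof -
        have "j \<in> G" "v \<noteq> j" using j by auto
        from E1[OF this(1) v this(2)] show ?thesis by (simp add: power2_eq_square n_def)
      qed
      then show "c j * (bil N v j * bil N v j - n j / 6 * bil N v v) = 0" by (simp add: n_def)
    qed
    also have "c v * (bil N v v * bil N v v - n v / 6 * bil N v v) = n v"
      using nv by (simp add: c_def n_def field_simps)
    finally show ?thesis by (simp add: quadval_bil BX n_def)
  qed
  have X0: "X = 0" using QZ[OF Xs] qX by blast
  obtain k where k: "k \<in> G" using cG by fastforce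
  have "card (G - {k}) = 9" using cG k by (simp add: card_Diff_singleton)
  then have "G - {k} \<noteq> {}" by (metis card.empty zero_neq_numeral)
  then obtain l where l: "l \<in> G - {k}" by blast
  then have lG: "l \<in> G" and kl: "l \<noteq> k" by auto
  define g where "g = bil N k l"
  have nk: "n k \<noteq> 0" using nz[OF k] by (simp add: n_def)
  have nl: "n l \<noteq> 0" using nz[OF lG] by (simp add: n_def)
  have g2: "g^2 = n l * n k / 6" using E1[OF lG k] kl by (simp add: g_def n_def)
  have g0: "g \<noteq> 0" using g2 nk nl by auto
  have cn: "c j * (n j / 6) = 1 / 5" if "j \<in> G" for j
    using nz[OF that] by (simp add: c_def n_def field_simps)
  define S where "S = (\<Sum>j\<in>G. c j * bil N k j * bil N l j)"
  have "bil X k l = 0" using X0 by (simp add: bil_zeroM)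
  then have A: "g - (\<Sum>j\<in>G. c j * (bil N k j * bil N l j - n j / 6 * g)) = 0" by (simp add: BX g_def)
  have B: "(\<Sum>j\<in>G. c j * (bil N k j * bil N l j - n j / 6 * g)) = S - (\<Sum>j\<in>G. g / 5)"
  proof -
    have "(\<Sum>j\<in>G. c j * (bil N k j * bil N l j - n j / 6 * g)) = (\<Sum>j\<in>G. c j * bil N k j * bil N l j - g / 5)"
    proof (rule sum.cong[OF refl])
      fix j assume "j \<in> G"
      from cn[OF this] show "c j * (bil N k j * bil N l j - n j / 6 * g) = c j * bil N k j * bil N l j - g / 5"
        by (simp add: algebra_simps)
    qed
    then show ?thesis by (simp add: S_def sum_subtractf)
  qed
  have C: "(\<Sum>j\<in>G. g / 5) = 2 * g" using cG by simp
  have e: "g - (S - 2 * g) = 0" using A unfolding B C .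
  have "S = (g - (S - 2 * g)) * (-1) + 3 * g" by (simp add: algebra_simps)
  then have S3: "S = 3 * g" using e by simp
  define R where "R = G - {k} - {l}"
  have fR: "finite R" using fG by (simp add: R_def)
  have "S = c k * bil N k k * bil N l k + (\<Sum>j\<in>G-{k}. c j * bil N k j * bil N l j)"
    unfolding S_def by (rule sum.remove[OF fG k])
  also have "(\<Sum>j\<in>G-{k}. c j * bil N k j * bil N l j) = c l * bil N k l * bil N l l + (\<Sum>j\<in>R. c j * bil N k j * bil N l j)"
    unfolding R_def by (rule sum.remove) (use fG l in auto)
  finally have F: "S = c k * n k * g + c l * g * n l + (\<Sum>j\<in>R. c j * bil N k j * bil N l j)"
    by (simp add: n_def g_def bs[of l k])
  have e1: "c k * n k * g = 6/5 * g" using nk by (simp add: c_def)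
  have e2: "c l * g * n l = 6/5 * g" using nl by (simp add: c_def)
  have "(\<Sum>j\<in>R. c j * bil N k j * bil N l j) = S - c k * n k * g - c l * g * n l"
    using F by (simp add: algebra_simps)
  also have "\<dots> = 3 * g - 6/5 * g - 6/5 * g" unfolding e1 e2 S3 ..
  also have "\<dots> = 3/5 * g" by (simp add: field_simps)
  finally have SR: "(\<Sum>j\<in>R. c j * bil N k j * bil N l j) = 3/5 * g" .
  define \<zeta> where "\<zeta> j = 2 * bil N k j * bil N l j / (n j * g)" for j
  have "(\<Sum>j\<in>R. \<zeta> j) = (\<Sum>j\<in>R. 5 / (3 * g) * (c j * bil N k j * bil N l j))"
  proof (rule sum.cong[OF refl])
    fix j assume "j \<in> R"
    then have "n j \<noteq> 0" using nz by (simp add: R_def n_def)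
    then show "\<zeta> j = 5 / (3 * g) * (c j * bil N k j * bil N l j)"
      using g0 by (simp add: \<zeta>_def c_def field_simps)
  qed
  also have "\<dots> = 5 / (3 * g) * (\<Sum>j\<in>R. c j * bil N k j * bil N l j)" by (rule sum_distrib_left[symmetric])
  also have "\<dots> = 5 / (3 * g) * (3/5 * g)" by (simp only: SR)
  also have "\<dots> = 1" using g0 by simp
  finally have sz: "(\<Sum>j\<in>R. \<zeta> j) = 1" .
  have z2: "(\<zeta> j)^2 = 2/3" if j: "j \<in> R" for j
  proof -
    have jG: "j \<in> G" and jk: "k \<noteq> j" and jl: "l \<noteq> j" using j by (auto simp: R_def)
    have nj: "n j \<noteq> 0" using nz[OF jG] by (simp add: n_def)
    have a: "(bil N k j)^2 = n j * n k / 6" using E1[OF jG k jk] by (simp add: n_def)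
    have b: "(bil N l j)^2 = n j * n l / 6" using E1[OF jG lG jl] by (simp add: n_def)
    have "(\<zeta> j)^2 = 4 * (bil N k j)^2 * (bil N l j)^2 / ((n j)^2 * g^2)"
      by (simp add: \<zeta>_def power_divide power_mult_distrib)
    also have "\<dots> = 2/3" unfolding a b g2 using nj nk nl by (simp add: field_simps power2_eq_square)
    finally show ?thesis .
  qed
  have "card R = 8" using cG k lG kl by (simp add: R_def card_Diff_singleton)
  then have "R \<noteq> {}" by (metis card.empty zero_neq_numeral)
  then obtain j0 where j0: "j0 \<in> R" by blast
  obtain m :: int where m: "(\<Sum>j\<in>R. \<zeta> j) = of_int m * \<zeta> j0"
    using sum_pm[OF fR, of \<zeta> "\<zeta> j0"] z2 j0 by auto
  have "1 = (of_int m * \<zeta> j0)^2" using m sz by simp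
  also have "\<dots> = of_int m ^ 2 * (2/3)" by (simp add: power_mult_distrib z2[OF j0])
  finally have "(3::complex) = of_int (2 * m^2)" by (simp add: field_simps)
  then have "(3::int) = 2 * m^2" by (metis of_int_eq_iff of_int_numeral)
  then show False using no_int_sq[of m] by simp
qed

theorem lemma4p15:
  fixes q :: poly4
  assumes "is_poly q" and "homog 2 q" and "rank (qmat q) = 4"
  shows "\<not> (\<exists>G. finite G \<and> card G = 10 \<and> proj_points G \<and> apolar G (pmult q q))"
proof
  assume "\<exists>G. finite G \<and> card G = 10 \<and> proj_points G \<and> apolar G (pmult q q)"
  then obtain G where fG: "finite G" and cG: "card G = 10" and pp: "proj_points G"
    and ap: "apolar G (pmult q q)" by blast
  have hq: "homog 2 q" by (rule assms(2))
  define M where "M = qmat q"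
  have Ms: "transpose M = M" by (simp add: M_def vec_eq_iff transpose_def qmat_sym[of q])
  obtain N where NM: "N ** M = mat 1" and MN: "M ** N = mat 1"
    using rank_inv[of M] assms(3) by (auto simp: M_def)
  have Nsy: "transpose N = N" by (rule Ns[OF NM MN Ms])
  have QZ: "B = 0" if Bs: "transpose B = B" and van: "\<forall>v\<in>G. quadval B v = 0" for B
  proof (rule LA1[OF NM MN Ms Bs])
    fix i k
    show "(\<Sum>s\<in>UNIV. \<Sum>t\<in>UNIV. B $ s $ t * (M $ s $ t * M $ i $ k + M $ s $ i * M $ t $ k + M $ s $ k * M $ t $ i)) = 0"
      unfolding M_def by (rule quad_cond[OF hq ap]) (use van in blast)
  qed
  have E: "bil N p p \<noteq> 0 \<and> (\<forall>k\<in>G. k \<noteq> p \<longrightarrow> (bil N k p)^2 = bil N p p * bil N k k / 6)"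
    if pG: "p \<in> G" for p
  proof -
    have p0: "p \<noteq> 0" using pp pG by (simp add: proj_points_def)
    obtain B where Bs: "transpose B = B" and B0: "B \<noteq> 0" and Bv: "\<forall>v\<in>G-{p}. quadval B v = 0"
      using F2[OF fG cG pG] by blast
    have Bp: "quadval B p \<noteq> 0"
    proof
      assume "quadval B p = 0"
      then have "\<forall>v\<in>G. quadval B v = 0" using Bv by blast
      then show False using QZ[OF Bs] B0 by blast
    qed
    have hyp: "(\<Sum>r\<in>UNIV. \<Sum>s\<in>UNIV. \<Sum>t\<in>UNIV. a $ r * B $ s $ t * (M $ r $ s * M $ t $ i + M $ r $ t * M $ s $ i + M $ r $ i * M $ s $ t)) = 0"
      if ap0: "dotv a p = 0" for a i
      unfolding M_def
    proof (rule cub_cond[OF hq ap])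
      fix v assume "v \<in> G"
      then show "linval a v * quadval B v = 0"
        using Bv ap0 by (cases "v = p") (auto simp: linval_dotv)
    qed
    obtain lam mu where main: "\<forall>x y. bil B x y = lam * bil N x y + mu * bil N x p * bil N y p"
      and tr: "6 * lam = - mu * bil N p p"
      using STRUCT[OF NM MN Ms p0 Bs hyp] by blast
    define n where "n = bil N p p"
    have qB: "quadval B v = lam * bil N v v + mu * (bil N v p)^2" for v
      using main by (simp add: quadval_bil power2_eq_square mult.assoc)
    have lam: "lam = - mu * n / 6" using tr by (simp add: n_def field_simps)
    have "quadval B p = lam * n + mu * n^2" using qB[of p] by (simp add: n_def)
    then have qBp: "quadval B p = 5/6 * mu * n^2" by (simp add: lam power2_eq_square field_simps)
    then have n0: "n \<noteq> 0" and mu0: "mu \<noteq> 0" using Bp by auto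
    have "(bil N k p)^2 = n * bil N k k / 6" if kG: "k \<in> G" and kp: "k \<noteq> p" for k
    proof -
      have "quadval B k = 0" using Bv kG kp by blast
      then have "mu * ((bil N k p)^2 - n * bil N k k / 6) = 0"
        using qB[of k] by (simp add: lam algebra_simps)
      then show ?thesis using mu0 by simp
    qed
    then show ?thesis using n0 by (simp add: n_def)
  qed
  show False
  proof (rule FINAL[OF Nsy fG cG])
    show "\<And>B. transpose B = B \<Longrightarrow> \<forall>v\<in>G. quadval B v = 0 \<Longrightarrow> B = 0" using QZ by blast
    show "\<And>p. p \<in> G \<Longrightarrow> bil N p p \<noteq> 0" using E by blast
    show "\<And>p k. p \<in> G \<Longrightarrow> k \<in> G \<Longrightarrow> k \<noteq> p \<Longrightarrow> (bil N k p)^2 = bil N p p * bil N k k / 6"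
      using E by blast
  qed
qed

end
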